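(* Let $O,A,B$ be three pairwise distinct points of the plane, $\vec\alpha=\overrightarrow{AO}/OA$, $\vec\beta=\overrightarrow{OB}/OB$, with oriented angle $\Omega=(\widehat{\vec\alpha,\vec\beta})\in\,]0,\pi[$. Identify the plane with $\mathbb{C}$ via the orthonormal frame with origin $A$ and first axis $\vec\alpha$, and let $b$ be the affix of $B$. Let $p\ge1$ and $\theta_0=\Omega/p$. For $R=(R_0,\dots,R_{p-1})\in(\mathbb{R}_+^* )^p$, let $X$ be the curve starting at $A$ with tangent $\vec\alpha$ made of $p$ consecutive arcs of circle, the $k$-th of radius $R_k$, each turning counterclockwise by the angle $\theta_0$. Then $X$ belongs to $\mathcal{E}$ if and only if $$b=\sum_{k=0}^{p-1} i\,(1-e^{i\theta_0})\,e^{ik\theta_0}R_k,$$ which is equivalent to the real linear system $\mathcal{A}R=\mathcal{B}$, where $\mathcal{A}\in\mathcal{M}_{2,p}(\mathbb{R})$ has entries $\mathcal{A}_{1,k}=\operatorname{Re}\big(i(1-e^{i\theta_0})e^{i(k-1)\theta_0}\big)$, $\mathcal{A}_{2,k}=\operatorname{Im}\big(i(1-e^{i\theta_0})e^{i(k-1)\theta_0}\big)$ for $1\le k\le p$, and $\mathcal{B}=(\operatorname{Re} b,\operatorname{Im} b)^T$. Moreover, $$\big\|\,\|X''\|\,\big\|_{L^\infty(0,L)}=\frac{1}{\min_{0\le k\le p-1}R_k}.$$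
   Context: $\mathcal{E}$ is the set of curves $X:[0,L]\to\mathbb{R}^2$ ($L>0$), $X\in W^{2,\infty}(0,L;\mathbb{R}^2)$, with $\|X'(s)\|=1$, $X(0)=A$, $X(L)=B$, $X'(0)=\vec\alpha$, $X'(L)=\vec\beta$, and with a nondecreasing continuous determination of the angle $\phi(s)=(\widehat{\vec\alpha,X'(s)})$. $\|\,\|X''\|\,\|_{L^\infty}$ is the essential supremum of $s\mapsto\|X''(s)\|$. *)

theory Defs
  imports "HOL-Analysis.Analysis" "HOL-Probability.Essential_Supremum"
begin

text \<open>W^{2,\<infinity>}(0,L): X is differentiable on [0,L] with derivative X1, and X1 is the
  indefinite integral of an essentially bounded integrable function X2 (the weak second
  derivative, which lies in L^\<infinity>).\<close>
definition W2inf :: "real \<Rightarrow> (real \<Rightarrow> complex) \<Rightarrow> bool" where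
  "W2inf L X \<longleftrightarrow> (\<exists>X1 X2.
      (\<forall>t\<in>{0..L}. (X has_vector_derivative X1 t) (at t within {0..L})) \<and>
      X2 integrable_on {0..L} \<and>
      (\<exists>C. AE t in lebesgue_on {0..L}. norm (X2 t) \<le> C) \<and>
      (\<forall>t\<in>{0..L}. X1 t = X1 0 + integral {0..t} X2))"

definition dcurve :: "real \<Rightarrow> (real \<Rightarrow> complex) \<Rightarrow> real \<Rightarrow> complex" where
  "dcurve L X s = vector_derivative X (at s within {0..L})"

text \<open>The admissible set \<E> (depending on A, B, alpha, beta), for a curve X on [0,L].
  The angle phi(s) = (alpha, X'(s)) is encoded by X'(s) = alpha * cis(phi s).\<close>
definition in_E :: "complex \<Rightarrow> complex \<Rightarrow> complex \<Rightarrow> complex \<Rightarrow> real \<Rightarrow> (real \<Rightarrow> complex) \<Rightarrow> bool" where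
  "in_E A B \<alpha> \<beta> L X \<longleftrightarrow>
     L > 0 \<and> W2inf L X \<and>
     (\<forall>s\<in>{0..L}. norm (dcurve L X s) = 1) \<and>
     X 0 = A \<and> X L = B \<and> dcurve L X 0 = \<alpha> \<and> dcurve L X L = \<beta> \<and>
     (\<exists>\<phi>::real \<Rightarrow> real. continuous_on {0..L} \<phi> \<and> mono_on {0..L} \<phi> \<and>
        (\<forall>s\<in>{0..L}. dcurve L X s = \<alpha> * cis (\<phi> s)))"

definition arc_start :: "real \<Rightarrow> (nat \<Rightarrow> real) \<Rightarrow> nat \<Rightarrow> real" where
  "arc_start \<theta>0 R k = \<theta>0 * (\<Sum>j<k. R j)"

text \<open>The curve made of p consecutive circular arcs, in the complex frame with origin A and
  first axis alpha (so it starts at 0 with tangent 1): the k-th arc has radius R k and turns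
  counterclockwise by theta0.  At arclength s the k-th arc has been traversed over the length
  min (R k * theta0) (max 0 (s - arc_start k)); a traversal of length c of the k-th arc
  contributes  i R_k e^{i k theta0} (1 - e^{i c / R_k}).\<close>
definition arcs_curve :: "nat \<Rightarrow> real \<Rightarrow> (nat \<Rightarrow> real) \<Rightarrow> real \<Rightarrow> complex" where
  "arcs_curve p \<theta>0 R s =
     (\<Sum>k<p. \<i> * of_real (R k) * cis (real k * \<theta>0) *
        (1 - cis (min (R k * \<theta>0) (max 0 (s - arc_start \<theta>0 R k)) / R k)))"

end

theory Submission imports Defs begin

lemma cis_affine_vd:
  fixes r :: real
  assumes "r \<noteq> 0"
  shows "((\<lambda>t. cis ((t - c)/r)) has_vector_derivative (\<i> * cis ((x - c)/r) / of_real r)) (at x within S)"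
  unfolding has_vector_derivative_def
  apply (rule has_derivative_eq_rhs)
   apply (rule has_derivative_cis)
   apply (auto intro!: derivative_eq_intros simp: assms)
  apply (rule ext)
  apply (simp add: assms scaleR_conv_of_real)
  done

lemma arc_start_0[simp]: "arc_start \<theta> R 0 = 0" by (simp add: arc_start_def)

lemma arc_start_Suc: "arc_start \<theta> R (Suc k) = arc_start \<theta> R k + \<theta> * R k"
  by (simp add: arc_start_def algebra_simps)

lemma arc_start_mono:
  assumes "\<theta> \<ge> 0" "\<forall>k<p. R k > 0" "k \<le> j" "j \<le> p"
  shows "arc_start \<theta> R k \<le> arc_start \<theta> R j"
proof -
  have "(\<Sum>i<k. R i) \<le> (\<Sum>i<j. R i)"
    using assms by (intro sum_mono2) (auto intro: less_imp_le)
  then show ?thesis unfolding arc_start_def using assms(1) by (simp add: mult_left_mono)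
qed

lemma arc_start_strict:
  assumes "\<theta> > 0" "\<forall>k<p. R k > 0" "k < j" "j \<le> p"
  shows "arc_start \<theta> R k < arc_start \<theta> R j"
proof -
  have "arc_start \<theta> R k < arc_start \<theta> R (Suc k)"
    using assms by (simp add: arc_start_Suc)
  also have "\<dots> \<le> arc_start \<theta> R j"
    using assms by (intro arc_start_mono) auto
  finally show ?thesis .
qed

definition gfun :: "real \<Rightarrow> (nat \<Rightarrow> real) \<Rightarrow> nat \<Rightarrow> real \<Rightarrow> real" where
  "gfun \<theta> R k s = min (R k * \<theta>) (max 0 (s - arc_start \<theta> R k)) / R k"

lemma g_before:
  assumes "arc_start \<theta> R (Suc k) \<le> s" "R k > 0" "\<theta> \<ge> 0"
  shows "gfun \<theta> R k s = \<theta>"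
proof -
  have "s - arc_start \<theta> R k \<ge> R k * \<theta>" using assms by (simp add: arc_start_Suc algebra_simps)
  moreover have "R k * \<theta> \<ge> 0" using assms by simp
  ultimately show ?thesis using assms unfolding gfun_def by simp
qed

lemma g_after:
  assumes "s \<le> arc_start \<theta> R k" "R k > 0" "\<theta> \<ge> 0"
  shows "gfun \<theta> R k s = 0"
  using assms unfolding gfun_def by simp

lemma g_on:
  assumes "arc_start \<theta> R k \<le> s" "s \<le> arc_start \<theta> R (Suc k)" "R k > 0"
  shows "gfun \<theta> R k s = (s - arc_start \<theta> R k) / R k"
  using assms unfolding gfun_def by (simp add: arc_start_Suc algebra_simps)

lemma arcs_curve_gfun:
  "arcs_curve p \<theta> R s = (\<Sum>k<p. \<i> * of_real (R k) * cis (real k * \<theta>) * (1 - cis (gfun \<theta> R k s)))"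
  by (simp add: arcs_curve_def gfun_def)

lemma sum_split_piece:
  fixes F a :: "nat \<Rightarrow> 'a::comm_monoid_add" and m p :: nat
  assumes "m < p" "\<And>k. k < m \<Longrightarrow> F k = a k" "F m = b" "\<And>k. m < k \<Longrightarrow> k < p \<Longrightarrow> F k = 0"
  shows "(\<Sum>k<p. F k) = (\<Sum>k<m. a k) + b"
proof -
  have "(\<Sum>k<p. F k) = (\<Sum>k\<in>{0..<m}. F k) + (\<Sum>k\<in>{m..<p}. F k)"
    using assms(1) by (simp add: atLeast0LessThan[symmetric] sum.atLeastLessThan_concat)
  also have "(\<Sum>k\<in>{m..<p}. F k) = F m + (\<Sum>k\<in>{Suc m..<p}. F k)"
    using assms(1) by (simp add: sum.atLeast_Suc_lessThan)
  also have "(\<Sum>k\<in>{Suc m..<p}. F k) = 0" using assms(4) by (intro sum.neutral) auto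
  also have "(\<Sum>k\<in>{0..<m}. F k) = (\<Sum>k<m. a k)"
    using assms(2) by (simp add: atLeast0LessThan)
  finally show ?thesis using assms(3) by simp
qed

lemma piece_facts:
  assumes th: "\<theta> > 0" and R: "\<forall>k<p. R k > 0" and m: "m < p"
    and s1: "arc_start \<theta> R m \<le> s" and s2: "s \<le> arc_start \<theta> R (Suc m)"
  shows "arcs_curve p \<theta> R s = (\<Sum>k<m. \<i> * of_real (R k) * cis (real k * \<theta>) * (1 - cis \<theta>))
            + \<i> * of_real (R m) * cis (real m * \<theta>) * (1 - cis ((s - arc_start \<theta> R m) / R m))"
    and "(\<Sum>k<p. gfun \<theta> R k s) = real m * \<theta> + (s - arc_start \<theta> R m) / R m"
proof -
  have lt: "gfun \<theta> R k s = \<theta>" if "k < m" for k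
  proof (rule g_before)
    have "arc_start \<theta> R (Suc k) \<le> arc_start \<theta> R m"
      using that m th R by (intro arc_start_mono[of _ p]) auto
    then show "arc_start \<theta> R (Suc k) \<le> s" using s1 by simp
  qed (use that m th R in auto)
  have gt: "gfun \<theta> R k s = 0" if "m < k" "k < p" for k
  proof (rule g_after)
    have "arc_start \<theta> R (Suc m) \<le> arc_start \<theta> R k"
      using that m th R by (intro arc_start_mono[of _ p]) auto
    then show "s \<le> arc_start \<theta> R k" using s2 by simp
  qed (use that m th R in auto)
  have eq: "gfun \<theta> R m s = (s - arc_start \<theta> R m) / R m"
    using g_on s1 s2 R m by auto
  show "arcs_curve p \<theta> R s = (\<Sum>k<m. \<i> * of_real (R k) * cis (real k * \<theta>) * (1 - cis \<theta>))
            + \<i> * of_real (R m) * cis (real m * \<theta>) * (1 - cis ((s - arc_start \<theta> R m) / R m))"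
    unfolding arcs_curve_gfun by (rule sum_split_piece[OF m]) (auto simp: lt gt eq)
  have "(\<Sum>k<p. gfun \<theta> R k s) = (\<Sum>k<m. \<theta>) + (s - arc_start \<theta> R m) / R m"
    by (rule sum_split_piece[OF m]) (auto simp: lt gt eq)
  then show "(\<Sum>k<p. gfun \<theta> R k s) = real m * \<theta> + (s - arc_start \<theta> R m) / R m" by simp
qed

lemma locate:
  assumes "\<theta> > 0" "\<forall>k<p. R k > 0"
  shows "0 < n \<Longrightarrow> n \<le> p \<Longrightarrow> 0 \<le> y \<Longrightarrow> y \<le> arc_start \<theta> R n \<Longrightarrow>
    \<exists>m<n. arc_start \<theta> R m \<le> y \<and> y \<le> arc_start \<theta> R (Suc m)"
proof (induction n)
  case 0 then show ?case by simp
next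
  case (Suc n)
  show ?case
  proof (cases "n > 0 \<and> y \<le> arc_start \<theta> R n")
    case True
    then obtain m where "m < n" "arc_start \<theta> R m \<le> y \<and> y \<le> arc_start \<theta> R (Suc m)"
      using Suc by auto
    then show ?thesis by (intro exI[of _ m]) auto
  next
    case False
    then have "arc_start \<theta> R n \<le> y" using Suc by auto
    then show ?thesis using Suc by (intro exI[of _ n]) auto
  qed
qed

lemma locate_open:
  assumes "\<theta> > 0" "\<forall>k<p. R k > 0" "0 < p" "0 \<le> y" "y \<le> arc_start \<theta> R p"
    "y \<notin> arc_start \<theta> R ` {..p}"
  shows "\<exists>m<p. arc_start \<theta> R m < y \<and> y < arc_start \<theta> R (Suc m)"
proof -
  obtain m where m: "m < p" "arc_start \<theta> R m \<le> y" "y \<le> arc_start \<theta> R (Suc m)"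
    using locate[OF assms(1,2) assms(3) order_refl assms(4,5)] by auto
  have "arc_start \<theta> R m \<noteq> y" "arc_start \<theta> R (Suc m) \<noteq> y"
    using assms(6) m(1) by auto
  then show ?thesis using m by (intro exI[of _ m]) auto
qed

lemma piece_deriv:
  assumes th: "\<theta> > 0" and R: "\<forall>k<p. R k > 0" and m: "m < p"
    and s: "s \<in> {arc_start \<theta> R m <..< arc_start \<theta> R (Suc m)}"
  shows "(arcs_curve p \<theta> R has_vector_derivative cis (real m * \<theta> + (s - arc_start \<theta> R m) / R m)) (at s)"
proof -
  define C where "C = (\<Sum>k<m. \<i> * of_real (R k) * cis (real k * \<theta>) * (1 - cis \<theta>))"
  define G where "G = (\<lambda>t. C + \<i> * of_real (R m) * cis (real m * \<theta>) * (1 - cis ((t - arc_start \<theta> R m) / R m)))"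
  have Rm: "R m > 0" using R m by auto
  let ?D = "\<i> * cis ((s - arc_start \<theta> R m)/R m) / of_real (R m)"
  have d1: "((\<lambda>t. cis ((t - arc_start \<theta> R m) / R m)) has_vector_derivative ?D) (at s)"
    by (rule cis_affine_vd) (use Rm in auto)
  have d2: "((\<lambda>t. 1 - cis ((t - arc_start \<theta> R m) / R m)) has_vector_derivative (0 - ?D)) (at s)"
    by (rule has_vector_derivative_diff[OF has_vector_derivative_const d1])
  have d3: "((\<lambda>t. \<i> * of_real (R m) * cis (real m * \<theta>) * (1 - cis ((t - arc_start \<theta> R m) / R m)))
      has_vector_derivative (\<i> * of_real (R m) * cis (real m * \<theta>) * (0 - ?D))) (at s)"
    by (rule has_vector_derivative_mult_right[OF d2])
  have "(G has_vector_derivative (0 + \<i> * of_real (R m) * cis (real m * \<theta>) * (0 - ?D))) (at s)"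
    unfolding G_def by (rule has_vector_derivative_add[OF has_vector_derivative_const d3])
  then have "(G has_vector_derivative (\<i> * of_real (R m) * cis (real m * \<theta>) * (- ?D))) (at s)"
    by simp
  also have "(\<i> * of_real (R m) * cis (real m * \<theta>) * (- (\<i> * cis ((s - arc_start \<theta> R m)/R m) / of_real (R m))))
      = cis (real m * \<theta> + (s - arc_start \<theta> R m) / R m)"
  proof -
    have "(\<i> * of_real (R m) * cis (real m * \<theta>) * (- (\<i> * cis ((s - arc_start \<theta> R m)/R m) / of_real (R m))))
      = cis (real m * \<theta>) * cis ((s - arc_start \<theta> R m)/R m)"
      using Rm by (simp add: field_simps)
    also have "\<dots> = cis (real m * \<theta> + (s - arc_start \<theta> R m) / R m)" by (simp add: cis_mult)
    finally show ?thesis .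
  qed
  finally have d: "(G has_vector_derivative cis (real m * \<theta> + (s - arc_start \<theta> R m) / R m)) (at s)" .
  show ?thesis
    apply (rule has_vector_derivative_transform_within_open[OF d, of "{arc_start \<theta> R m <..< arc_start \<theta> R (Suc m)}"])
    using s piece_facts(1)[OF th R m] by (auto simp: G_def C_def)
qed

lemma cis_lin_vd:
  fixes r :: real
  assumes "r \<noteq> 0"
  shows "((\<lambda>t. cis (a + (t - c)/r)) has_vector_derivative (\<i> * cis (a + (x - c)/r) / of_real r)) (at x within S)"
proof -
  have e: "\<And>t. a + (t - c)/r = (t - (c - a * r))/r" using assms by (simp add: field_simps)
  show ?thesis unfolding e by (rule cis_affine_vd[OF assms])
qed

definition phif :: "nat \<Rightarrow> real \<Rightarrow> (nat \<Rightarrow> real) \<Rightarrow> real \<Rightarrow> real" where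
  "phif p \<theta> R s = (\<Sum>k<p. gfun \<theta> R k s)"

lemma continuous_arcs:
  assumes "\<forall>k<p. R k > 0"
  shows "continuous_on S (arcs_curve p \<theta> R)"
  unfolding arcs_curve_def using assms by (intro continuous_intros) auto

lemma continuous_phif:
  assumes "\<forall>k<p. R k > 0"
  shows "continuous_on S (phif p \<theta> R)"
  unfolding phif_def gfun_def using assms by (intro continuous_intros) auto

lemma mono_gfun:
  assumes "R k > 0" "x \<le> y"
  shows "gfun \<theta> R k x \<le> gfun \<theta> R k y"
  unfolding gfun_def using assms by (intro divide_right_mono) (auto simp: min_def max_def)

lemma mono_phif:
  assumes "\<forall>k<p. R k > 0"
  shows "mono_on S (phif p \<theta> R)"
  unfolding phif_def using assms by (intro mono_onI sum_mono mono_gfun) auto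

lemma X_deriv_within:
  assumes th: "\<theta> > 0" and R: "\<forall>k<p. R k > 0" and p: "0 < p"
    and L: "L = arc_start \<theta> R p" and s: "s \<in> {0..L}"
  shows "(arcs_curve p \<theta> R has_vector_derivative cis (phif p \<theta> R s)) (at s within {0..L})"
proof -
  have ftc: "((\<lambda>t. cis (phif p \<theta> R t)) has_integral (arcs_curve p \<theta> R x - arcs_curve p \<theta> R 0)) {0..x}"
    if x: "x \<in> {0..L}" for x
  proof (rule fundamental_theorem_of_calculus_interior_strong[of "arc_start \<theta> R ` {..p}"])
    show "finite (arc_start \<theta> R ` {..p})" by simp
    show "0 \<le> x" using x by simp
    show "continuous_on {0..x} (arcs_curve p \<theta> R)" by (rule continuous_arcs[OF R])
    fix y assume y: "y \<in> {0<..<x} - arc_start \<theta> R ` {..p}"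
    obtain m where m: "m < p" "arc_start \<theta> R m < y" "y < arc_start \<theta> R (Suc m)"
      using locate_open[OF th R p, of y] y x L by auto
    have "phif p \<theta> R y = real m * \<theta> + (y - arc_start \<theta> R m) / R m"
      unfolding phif_def using piece_facts(2)[OF th R m(1), of y] m by auto
    then show "(arcs_curve p \<theta> R has_vector_derivative cis (phif p \<theta> R y)) (at y)"
      using piece_deriv[OF th R m(1), of y] m by auto
  qed
  have cont: "continuous_on {0..L} (\<lambda>t. cis (phif p \<theta> R t))"
    by (intro continuous_intros continuous_phif[OF R])
  have "((\<lambda>u. arcs_curve p \<theta> R 0 + integral {0..u} (\<lambda>t. cis (phif p \<theta> R t))) has_vector_derivative
      (0 + cis (phif p \<theta> R s))) (at s within {0..L})"
    by (rule has_vector_derivative_add[OF has_vector_derivative_const integral_has_vector_derivative[OF cont s]])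
  then have d: "((\<lambda>u. arcs_curve p \<theta> R 0 + integral {0..u} (\<lambda>t. cis (phif p \<theta> R t))) has_vector_derivative
      cis (phif p \<theta> R s)) (at s within {0..L})" by simp
  show ?thesis
  proof (rule has_vector_derivative_transform[OF s _ d])
    fix x assume "x \<in> {0..L}"
    then show "arcs_curve p \<theta> R x = arcs_curve p \<theta> R 0 + integral {0..x} (\<lambda>t. cis (phif p \<theta> R t))"
      using integral_unique[OF ftc] by simp
  qed
qed

lemma rho_piece:
  assumes th: "\<theta> > 0" and R: "\<forall>k<p. R k > 0" and m: "m < p"
    and s: "s \<in> {arc_start \<theta> R m <..< arc_start \<theta> R (Suc m)}"
  shows "(\<Sum>k<p. if arc_start \<theta> R k < s \<and> s < arc_start \<theta> R (Suc k) then 1 / R k else 0) = 1 / R m"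
proof -
  have "(\<Sum>k<p. if arc_start \<theta> R k < s \<and> s < arc_start \<theta> R (Suc k) then 1 / R k else 0) = (\<Sum>k<m. 0) + 1 / R m"
  proof (rule sum_split_piece[OF m])
    fix k assume k: "k < m"
    have "arc_start \<theta> R (Suc k) \<le> arc_start \<theta> R m"
      using k m th R by (intro arc_start_mono[of _ p]) auto
    then show "(if arc_start \<theta> R k < s \<and> s < arc_start \<theta> R (Suc k) then 1 / R k else 0) = 0"
      using s by auto
  next
    fix k assume k: "m < k" "k < p"
    have "arc_start \<theta> R (Suc m) \<le> arc_start \<theta> R k"
      using k m th R by (intro arc_start_mono[of _ p]) auto
    then show "(if arc_start \<theta> R k < s \<and> s < arc_start \<theta> R (Suc k) then 1 / R k else 0) = 0"
      using s by auto
  qed (use s in auto)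
  then show ?thesis by simp
qed

lemma second_deriv_piece:
  assumes th: "\<theta> > 0" and R: "\<forall>k<p. R k > 0" and m: "m < p"
    and s: "s \<in> {arc_start \<theta> R m <..< arc_start \<theta> R (Suc m)}"
  shows "((\<lambda>t. vector_derivative (\<lambda>s. A + \<alpha> * arcs_curve p \<theta> R s) (at t)) has_vector_derivative
           \<alpha> * (\<i> * cis (real m * \<theta> + (s - arc_start \<theta> R m) / R m) / of_real (R m))) (at s)"
proof -
  have Rm: "R m \<noteq> 0" using R m by auto
  have d: "((\<lambda>t. \<alpha> * cis (real m * \<theta> + (t - arc_start \<theta> R m) / R m)) has_vector_derivative
           \<alpha> * (\<i> * cis (real m * \<theta> + (s - arc_start \<theta> R m) / R m) / of_real (R m))) (at s)"
    by (intro has_vector_derivative_mult_right cis_lin_vd Rm)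
  show ?thesis
  proof (rule has_vector_derivative_transform_within_open[OF d, of "{arc_start \<theta> R m <..< arc_start \<theta> R (Suc m)}"])
    fix y assume y: "y \<in> {arc_start \<theta> R m <..< arc_start \<theta> R (Suc m)}"
    have "((\<lambda>s. A + \<alpha> * arcs_curve p \<theta> R s) has_vector_derivative
        0 + \<alpha> * cis (real m * \<theta> + (y - arc_start \<theta> R m) / R m)) (at y)"
      by (intro has_vector_derivative_add has_vector_derivative_const has_vector_derivative_mult_right
          piece_deriv[OF th R m y])
    then show "\<alpha> * cis (real m * \<theta> + (y - arc_start \<theta> R m) / R m) =
        vector_derivative (\<lambda>s. A + \<alpha> * arcs_curve p \<theta> R s) (at y)"
      by (simp add: vector_derivative_at)
  qed (use s in auto)
qed

lemma id_meas_leb[measurable]: "(\<lambda>w::real. w) \<in> borel_measurable (lebesgue_on S)"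
  using id_borel_measurable_lebesgue_on by (simp add: id_def)

lemma rho_meas:
  "(\<lambda>s::real. ereal (\<Sum>k<p. if a k < s \<and> s < b k then c k else 0)) \<in> borel_measurable (lebesgue_on S)"
  by measurable

theorem proposition5p2:
  fixes P\<^sub>O A B :: complex and p :: nat and R :: "nat \<Rightarrow> real" and \<Omega> :: real
  assumes "P\<^sub>O \<noteq> A" and "P\<^sub>O \<noteq> B" and "A \<noteq> B"
    and "0 < \<Omega>" and "\<Omega> < pi"
    and "(B - P\<^sub>O) / of_real (cmod (B - P\<^sub>O)) = ((P\<^sub>O - A) / of_real (cmod (P\<^sub>O - A))) * cis \<Omega>"
    and "p \<ge> 1"
    and "\<forall>k<p. R k > 0"
  shows "let \<alpha> = (P\<^sub>O - A) / of_real (cmod (P\<^sub>O - A));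
             \<beta> = (B - P\<^sub>O) / of_real (cmod (B - P\<^sub>O));
             b = (B - A) / \<alpha>;
             \<theta>0 = \<Omega> / real p;
             L = \<theta>0 * (\<Sum>k<p. R k);
             X = (\<lambda>s. A + \<alpha> * arcs_curve p \<theta>0 R s);
             c = (\<lambda>k::nat. \<i> * (1 - cis \<theta>0) * cis (real k * \<theta>0))
         in (in_E A B \<alpha> \<beta> L X \<longleftrightarrow> b = (\<Sum>k<p. c k * of_real (R k)))
          \<and> (b = (\<Sum>k<p. c k * of_real (R k)) \<longleftrightarrow>
               ((\<Sum>k=1..p. Re (c (k - 1)) * R (k - 1)) = Re b \<and>
                (\<Sum>k=1..p. Im (c (k - 1)) * R (k - 1)) = Im b))
          \<and> esssup (lebesgue_on {0..L})
               (\<lambda>s. ereal (norm (vector_derivative (\<lambda>t. vector_derivative X (at t)) (at s))))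
             = ereal (1 / Min (R ` {..<p}))"
proof -
  define \<alpha> where "\<alpha> = (P\<^sub>O - A) / of_real (cmod (P\<^sub>O - A))"
  define \<beta> where "\<beta> = (B - P\<^sub>O) / of_real (cmod (B - P\<^sub>O))"
  define b where "b = (B - A) / \<alpha>"
  define \<theta> where "\<theta> = \<Omega> / real p"
  define L where "L = \<theta> * (\<Sum>k<p. R k)"
  define X where "X = (\<lambda>s. A + \<alpha> * arcs_curve p \<theta> R s)"
  define c where "c = (\<lambda>k::nat. \<i> * (1 - cis \<theta>) * cis (real k * \<theta>))"
  define S where "S = arc_start \<theta> R"
  define \<rho> where "\<rho> = (\<lambda>t. \<Sum>k<p. if S k < t \<and> t < S (Suc k) then 1 / R k else 0)"
  have R: "\<forall>k<p. R k > 0" using assms by simp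
  have p: "0 < p" using assms by simp
  have th: "\<theta> > 0" using assms by (simp add: \<theta>_def)
  have n\<alpha>: "cmod \<alpha> = 1" using assms(1) by (simp add: \<alpha>_def norm_divide)
  have \<alpha>0: "\<alpha> \<noteq> 0" using n\<alpha> by auto
  have h\<beta>: "\<beta> = \<alpha> * cis \<Omega>" using assms(6) by (simp add: \<alpha>_def \<beta>_def)
  have hL: "L = arc_start \<theta> R p" by (simp add: L_def arc_start_def)
  have Lpos: "L > 0" unfolding L_def using th R p by (intro mult_pos_pos sum_pos) auto
  have S0: "0 \<le> arc_start \<theta> R k" if "k \<le> p" for k
    using arc_start_mono[of \<theta> p R 0 k] th R that by auto
  have SL: "arc_start \<theta> R k \<le> L" if "k \<le> p" for k
    using arc_start_mono[of \<theta> p R k p] th R hL that by auto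
  have derX: "(X has_vector_derivative \<alpha> * cis (phif p \<theta> R s)) (at s within {0..L})" if "s \<in> {0..L}" for s
  proof -
    have "(X has_vector_derivative 0 + \<alpha> * cis (phif p \<theta> R s)) (at s within {0..L})"
      unfolding X_def by (intro has_vector_derivative_add has_vector_derivative_const
          has_vector_derivative_mult_right X_deriv_within[OF th R p hL that])
    then show ?thesis by simp
  qed
  have dc: "dcurve L X s = \<alpha> * cis (phif p \<theta> R s)" if "s \<in> {0..L}" for s
    unfolding dcurve_def using vector_derivative_within_cbox[of 0 L s X] derX[OF that] that Lpos
    by (simp add: cbox_interval)
  have g0: "gfun \<theta> R k 0 = 0" if "k < p" for k
    using g_after[of 0 \<theta> R k] S0[of k] R th that by auto
  have phi0: "phif p \<theta> R 0 = 0" unfolding phif_def using g0 by simp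
  have gL: "gfun \<theta> R k L = \<theta>" if "k < p" for k
    using g_before[of \<theta> R k L] SL[of "Suc k"] that R th by auto
  have "phif p \<theta> R L = (\<Sum>k<p. \<theta>)" unfolding phif_def by (rule sum.cong) (auto simp: gL)
  then have phiL: "phif p \<theta> R L = \<Omega>" using p by (simp add: \<theta>_def)
  have X0: "X 0 = A" unfolding X_def arcs_curve_gfun using g0 by simp
  have XL: "X L = A + \<alpha> * (\<Sum>k<p. c k * of_real (R k))"
  proof -
    have "(\<Sum>k<p. \<i> * of_real (R k) * cis (real k * \<theta>) * (1 - cis (gfun \<theta> R k L))) = (\<Sum>k<p. c k * of_real (R k))"
      by (rule sum.cong) (auto simp: gL c_def mult_ac)
    then show ?thesis by (simp add: X_def arcs_curve_gfun)
  qed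
  have W: "W2inf L X"
  proof -
    define X1 where "X1 = (\<lambda>s. \<alpha> * cis (phif p \<theta> R s))"
    define X2 where "X2 = (\<lambda>t. \<alpha> * (\<i> * cis (phif p \<theta> R t) * of_real (\<rho> t)))"
    have ftc2: "(X2 has_integral (X1 t - X1 0)) {0..t}" if t: "t \<in> {0..L}" for t
    proof (rule fundamental_theorem_of_calculus_interior_strong[of "arc_start \<theta> R ` {..p}"])
      show "finite (arc_start \<theta> R ` {..p})" by simp
      show "0 \<le> t" using t by simp
      show "continuous_on {0..t} X1" unfolding X1_def
        by (intro continuous_intros continuous_phif[OF R])
      fix y assume y: "y \<in> {0<..<t} - arc_start \<theta> R ` {..p}"
      obtain m where m: "m < p" "arc_start \<theta> R m < y" "y < arc_start \<theta> R (Suc m)"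
        using locate_open[OF th R p, of y] y t hL by auto
      have Rm: "R m > 0" using R m by auto
      have ph: "phif p \<theta> R z = real m * \<theta> + (z - arc_start \<theta> R m) / R m"
        if "z \<in> {arc_start \<theta> R m <..< arc_start \<theta> R (Suc m)}" for z
        unfolding phif_def using piece_facts(2)[OF th R m(1), of z] that by auto
      have rh: "\<rho> y = 1 / R m" unfolding \<rho>_def S_def using rho_piece[OF th R m(1), of y] m by auto
      have d: "((\<lambda>t. \<alpha> * cis (real m * \<theta> + (t - arc_start \<theta> R m) / R m)) has_vector_derivative
           \<alpha> * (\<i> * cis (real m * \<theta> + (y - arc_start \<theta> R m) / R m) / of_real (R m))) (at y)"
        using Rm by (intro has_vector_derivative_mult_right cis_lin_vd) auto
      have "X2 y = \<alpha> * (\<i> * cis (real m * \<theta> + (y - arc_start \<theta> R m) / R m) / of_real (R m))"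
        unfolding X2_def rh using ph[of y] m by (simp add: field_simps)
      then show "(X1 has_vector_derivative X2 y) (at y)"
        using has_vector_derivative_transform_within_open[OF d, of "{arc_start \<theta> R m <..< arc_start \<theta> R (Suc m)}" X1]
        using m ph by (auto simp: X1_def)
    qed
    have \<rho>b: "norm (X2 t) \<le> (\<Sum>k<p. 1 / R k)" for t
    proof -
      have "norm (X2 t) = \<bar>\<rho> t\<bar>" unfolding X2_def by (simp add: norm_mult n\<alpha>)
      also have "\<bar>\<rho> t\<bar> = \<rho> t" unfolding \<rho>_def using R by (intro abs_of_nonneg sum_nonneg) auto
      also have "\<rho> t \<le> (\<Sum>k<p. 1 / R k)" unfolding \<rho>_def using R by (intro sum_mono) auto
      finally show ?thesis .
    qed
    have c1: "\<forall>t\<in>{0..L}. (X has_vector_derivative X1 t) (at t within {0..L})"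
      using derX by (simp add: X1_def)
    have c2: "X2 integrable_on {0..L}" using ftc2[of L] Lpos by (auto intro: has_integral_integrable)
    have c3: "\<exists>C. AE t in lebesgue_on {0..L}. norm (X2 t) \<le> C"
      by (intro exI[of _ "\<Sum>k<p. 1 / R k"] always_eventually allI \<rho>b)
    have c4: "\<forall>t\<in>{0..L}. X1 t = X1 0 + integral {0..t} X2"
      using integral_unique[OF ftc2] by simp
    show ?thesis unfolding W2inf_def using c1 c2 c3 c4 by blast
  qed
  have part1: "in_E A B \<alpha> \<beta> L X \<longleftrightarrow> b = (\<Sum>k<p. c k * of_real (R k))"
  proof -
    have "in_E A B \<alpha> \<beta> L X \<longleftrightarrow> X L = B"
      unfolding in_E_def using Lpos W dc n\<alpha> X0 phi0 phiL h\<beta> continuous_phif[OF R] mono_phif[OF R]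
      by (auto simp: norm_mult intro!: exI[of _ "phif p \<theta> R"])
    also have "X L = B \<longleftrightarrow> b = (\<Sum>k<p. c k * of_real (R k))"
      using XL \<alpha>0 by (auto simp: b_def field_simps)
    finally show ?thesis .
  qed
  have part2: "(b = (\<Sum>k<p. c k * of_real (R k))) \<longleftrightarrow>
               ((\<Sum>k=1..p. Re (c (k - 1)) * R (k - 1)) = Re b \<and>
                (\<Sum>k=1..p. Im (c (k - 1)) * R (k - 1)) = Im b)"
  proof -
    have e1: "(\<Sum>k=1..p. Re (c (k - 1)) * R (k - 1)) = (\<Sum>k<p. Re (c k) * R k)"
      using sum.atLeast1_atMost_eq[of "\<lambda>k. Re (c (k - 1)) * R (k - 1)" p] by simp
    have e2: "(\<Sum>k=1..p. Im (c (k - 1)) * R (k - 1)) = (\<Sum>k<p. Im (c k) * R k)"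
      using sum.atLeast1_atMost_eq[of "\<lambda>k. Im (c (k - 1)) * R (k - 1)" p] by simp
    show ?thesis unfolding e1 e2 by (auto simp: complex_eq_iff Re_sum Im_sum)
  qed
  define F where "F = (\<lambda>s. ereal (norm (vector_derivative (\<lambda>t. vector_derivative X (at t)) (at s))))"
  have part3: "esssup (lebesgue_on {0..L}) F = ereal (1 / Min (R ` {..<p}))"
  proof -
    have "Min (R ` {..<p}) \<in> R ` {..<p}" using p by (intro Min_in) auto
    then obtain m0 where m0: "m0 < p" "R m0 = Min (R ` {..<p})" by auto
    have minle: "R m0 \<le> R k" if "k < p" for k using m0 that by simp
    have Fp: "F s = ereal (1 / R m)" if "m < p" "s \<in> {arc_start \<theta> R m <..< arc_start \<theta> R (Suc m)}" for m s
    proof -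
      have "R m > 0" using R that by auto
      then show ?thesis
        unfolding F_def X_def using vector_derivative_at[OF second_deriv_piece[OF th R that]] n\<alpha>
        by (simp add: norm_mult norm_divide)
    qed
    define E where "E = arc_start \<theta> R ` {..p}"
    have Esub: "E \<subseteq> {0..L}" using S0 SL by (auto simp: E_def)
    have sp: "space (lebesgue_on {0..L}) = {0..L}" by simp
    have F\<rho>: "F s = ereal (\<rho> s)" if sA: "s \<in> {0..L}" "s \<notin> E" for s
    proof -
      obtain m where m: "m < p" "arc_start \<theta> R m < s" "s < arc_start \<theta> R (Suc m)"
        using locate_open[OF th R p, of s] sA hL by (auto simp: E_def)
      then show ?thesis using Fp[of m s] rho_piece[OF th R m(1), of s] by (simp add: \<rho>_def S_def)
    qed
    have Fmeas: "F \<in> borel_measurable (lebesgue_on {0..L})"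
    proof (rule measurable_discrete_difference[where f="\<lambda>s. ereal (\<rho> s)" and X=E])
      show "(\<lambda>s. ereal (\<rho> s)) \<in> borel_measurable (lebesgue_on {0..L})"
        unfolding \<rho>_def by (rule rho_meas)
      show "countable E" by (simp add: E_def)
      show "{x} \<in> sets (lebesgue_on {0..L})" if "x \<in> E" for x
        using that Esub by (subst sets_restrict_space_iff) auto
    qed (use F\<rho> in auto)
    have Enull: "E \<in> null_sets (lebesgue_on {0..L})"
      using null_sets_restrict_space[of "{0..L}" lebesgue E] Esub
        null_sets_completionI[OF finite_imp_null_set_lborel[of E]] by (auto simp: E_def)
    have upper: "esssup (lebesgue_on {0..L}) F \<le> ereal (1 / R m0)"
    proof (rule esssup_I[OF Fmeas])
      show "AE x in lebesgue_on {0..L}. F x \<le> ereal (1 / R m0)"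
      proof (rule AE_I'[OF Enull], safe)
        fix x assume x: "x \<in> space (lebesgue_on {0..L})" "\<not> F x \<le> ereal (1 / R m0)"
        show "x \<in> E"
        proof (rule ccontr)
          assume "x \<notin> E"
          then obtain m where m: "m < p" "arc_start \<theta> R m < x" "x < arc_start \<theta> R (Suc m)"
            using locate_open[OF th R p, of x] x hL by (auto simp: E_def)
          have "1 / R m \<le> 1 / R m0" using minle[OF m(1)] R m0 by (intro divide_left_mono) auto
          then show False using x Fp[of m x] m by auto
        qed
      qed
    qed
    have lower: "ereal (1 / R m0) \<le> esssup (lebesgue_on {0..L}) F"
    proof (rule ccontr)
      assume "\<not> ereal (1 / R m0) \<le> esssup (lebesgue_on {0..L}) F"
      then have lt: "esssup (lebesgue_on {0..L}) F < ereal (1 / R m0)" by simp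
      define I where "I = {arc_start \<theta> R m0 <..< arc_start \<theta> R (Suc m0)}"
      have Isub: "I \<subseteq> {0..L}" using S0[of m0] SL[of "Suc m0"] m0 by (auto simp: I_def)
      have Sl: "arc_start \<theta> R m0 < arc_start \<theta> R (Suc m0)" using th R m0(1) by (simp add: arc_start_Suc)
      have "AE x in lebesgue_on {0..L}. F x \<le> esssup (lebesgue_on {0..L}) F" by (rule esssup_AE)
      then obtain N where N: "{x \<in> space (lebesgue_on {0..L}). \<not> F x \<le> esssup (lebesgue_on {0..L}) F} \<subseteq> N"
        "emeasure (lebesgue_on {0..L}) N = 0" "N \<in> sets (lebesgue_on {0..L})" by (rule AE_E)
      have "I \<subseteq> N"
      proof
        fix x assume x: "x \<in> I"
        then have "F x = ereal (1 / R m0)" using Fp[OF m0(1)] by (auto simp: I_def)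
        then have nle: "\<not> F x \<le> esssup (lebesgue_on {0..L}) F" using lt by simp
        have xi: "x \<in> space (lebesgue_on {0..L})" using x Isub by auto
        show "x \<in> N" using N(1) xi nle by blast
      qed
      then have "emeasure (lebesgue_on {0..L}) I \<le> emeasure (lebesgue_on {0..L}) N"
        using N(3) by (rule emeasure_mono)
      moreover have "emeasure (lebesgue_on {0..L}) I = ennreal (arc_start \<theta> R (Suc m0) - arc_start \<theta> R m0)"
        using Isub Sl by (subst emeasure_restrict_space) (auto simp: I_def)
      ultimately show False using N(2) Sl by simp
    qed
    show ?thesis using upper lower m0 by simp
  qed
  show ?thesis
    unfolding Let_def
    unfolding \<alpha>_def[symmetric] \<beta>_def[symmetric] b_def[symmetric] \<theta>_def[symmetric]
    unfolding L_def[symmetric] X_def[symmetric] c_def[symmetric] F_def[symmetric]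
    using part1 part2 part3 unfolding c_def F_def X_def by simp
qed

end
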